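(* Let $B\neq\emptyset$ be an event (a union of elements of $\Pi$) and let $X|B$ be a conditional gamble. Let $I\subset\mathbb{R}$ be an interval containing the image set $\{X(\omega):\omega\in\Pi,\ \omega\Rightarrow B\}$ of $X|B$, let $\phi:I\to\mathbb{R}$ be convex and $\psi:I\to\mathbb{R}$ be concave. Let $\mu$ be a real-valued uncertainty measure defined on the conditional gambles given $B$ (in particular on $X|B$ and on all gambles to which $\mu$ is applied below), satisfying axioms (M), (T), (PH), and let $\overline{\mu}$ be its conjugate, $\overline{\mu}(Y|B)=-\mu(-Y|B)$. Assume $\mu(X|B)$ is an interior point of $I$. (a) Let $J_\phi=[\phi'_-(\mu(X|B)),\phi'_+(\mu(X|B))]$. If there is $\lambda\in J_\phi$ with $\lambda\ge 0$, then $\mu(\phi(X|B))\ge\phi(\mu(X|B))$. If there is $\lambda\in J_\phi$ with $\lambda\le 0$, then $\overline{\mu}(\phi(X|B))\ge\phi(\mu(X|B))$. (b) Let $J_\psi=[\psi'_+(\mu(X|B)),\psi'_-(\mu(X|B))]$. If there is $\lambda\in J_\psi$ with $\lambda\ge 0$, then $\mu(\psi(X|B))\le\psi(\mu(X|B))$. If there is $\lambda\in J_\psi$ with $\lambda\le 0$, then $\overline{\mu}(\psi(X|B))\le\psi(\mu(X|B))$.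
   Context: $\Pi$ is a partition of the sure event into pairwise disjoint non-impossible events (possibly infinitely many); a gamble is a bounded map $X:\Pi\to\mathbb{R}$. For an event $B\neq\emptyset$ that is a union of elements of $\Pi$, the conditional gamble $X|B$ is the restriction of $X$ to the elements $\omega\in\Pi$ with $\omega\Rightarrow B$; for a real function $f$ defined on its image set, $f(X|B)$ is the conditional gamble $\omega\mapsto f(X(\omega))$ on those $\omega$. Axioms for $\mu$ (for all conditional gambles $X|B,Y|B$): (M) if $X|B\ge Y|B$ then $\mu(X|B)\ge\mu(Y|B)$; (T) $\mu(X+a|B)=\mu(X|B)+a$ for all $a\in\mathbb{R}$; (PH) $\mu(\lambda X|B)=\lambda\mu(X|B)$ for all $\lambda\ge 0$. $f'_+(x)$ and $f'_-(x)$ denote the right and left derivatives of $f$ at $x$. *)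

theory Defs
  imports "HOL-Analysis.Analysis"
begin

text \<open>Elements of the partition \<Pi> are modelled by the type 'w; an event B that is a
  union of elements of \<Pi> is a set of elements of type 'w.  A conditional gamble X|B is
  represented by a function X :: 'w \<Rightarrow> real, of which only the values on B matter;
  it is a (conditional) gamble when it is bounded on B.\<close>

definition cgamble :: "'w set \<Rightarrow> ('w \<Rightarrow> real) \<Rightarrow> bool" where
  "cgamble B X \<longleftrightarrow> bounded (X ` B)"

text \<open>Axioms (M), (T), (PH) for a real-valued uncertainty measure on the conditional
  gambles given B.\<close>

definition unc_measure :: "'w set \<Rightarrow> (('w \<Rightarrow> real) \<Rightarrow> real) \<Rightarrow> bool" where
  "unc_measure B \<mu> \<longleftrightarrow>
     (\<forall>X Y. cgamble B X \<longrightarrow> cgamble B Y \<longrightarrow> (\<forall>w\<in>B. X w \<ge> Y w) \<longrightarrow> \<mu> X \<ge> \<mu> Y) \<and>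
     (\<forall>X a. cgamble B X \<longrightarrow> \<mu> (\<lambda>w. X w + a) = \<mu> X + a) \<and>
     (\<forall>X l. cgamble B X \<longrightarrow> l \<ge> 0 \<longrightarrow> \<mu> (\<lambda>w. l * X w) = l * \<mu> X)"

definition conj_measure :: "(('w \<Rightarrow> real) \<Rightarrow> real) \<Rightarrow> ('w \<Rightarrow> real) \<Rightarrow> real" where
  "conj_measure \<mu> Y = - \<mu> (\<lambda>w. - Y w)"

definition right_deriv :: "(real \<Rightarrow> real) \<Rightarrow> real \<Rightarrow> real" where
  "right_deriv f x = Lim (at_right x) (\<lambda>y. (f y - f x) / (y - x))"

definition left_deriv :: "(real \<Rightarrow> real) \<Rightarrow> real \<Rightarrow> real" where
  "left_deriv f x = Lim (at_left x) (\<lambda>y. (f y - f x) / (y - x))"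

end

theory Submission
  imports Defs
begin

lemma swap_quot: "((a::real) - b) / (c - d) = (b - a) / (d - c)"
  by (metis minus_diff_eq minus_divide_divide)

lemma mono_lim_right:
  fixes g :: "real \<Rightarrow> real"
  assumes mb: "m < b" and mono: "\<And>y z. m<y \<Longrightarrow> y\<le>z \<Longrightarrow> z<b \<Longrightarrow> g y \<le> g z"
    and bd: "\<And>y. m<y \<Longrightarrow> y<b \<Longrightarrow> c \<le> g y"
  shows "(g \<longlongrightarrow> Inf (g ` {m<..<b})) (at_right m)"
proof (rule order_tendstoI)
  let ?S = "g ` {m<..<b}"
  have ne: "?S \<noteq> {}" using mb by auto
  have bdd: "bdd_below ?S" using bd by (auto intro!: bdd_belowI[of _ c])
  fix a assume a: "a < Inf ?S"
  show "eventually (\<lambda>y. a < g y) (at_right m)"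
    using eventually_at_right_real[OF mb]
  proof (rule eventually_mono)
    fix y assume "y \<in> {m<..<b}"
    then have "Inf ?S \<le> g y" using bdd by (intro cInf_lower) auto
    then show "a < g y" using a by linarith
  qed
next
  let ?S = "g ` {m<..<b}"
  have ne: "?S \<noteq> {}" using mb by auto
  fix a assume "Inf ?S < a"
  then obtain s where "s \<in> ?S" "s < a" using cInf_lessD[OF ne] by blast
  then obtain y0 where y0: "m<y0" "y0<b" "g y0 < a" by auto
  show "eventually (\<lambda>y. g y < a) (at_right m)"
    using eventually_at_right_real[OF y0(1)]
  proof (rule eventually_mono)
    fix y assume "y \<in> {m<..<y0}"
    then have "g y \<le> g y0" using mono y0 by auto
    then show "g y < a" using y0 by linarith
  qed
qed

lemma mono_lim_left:
  fixes g :: "real \<Rightarrow> real"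
  assumes am: "a < m" and mono: "\<And>y z. a<y \<Longrightarrow> y\<le>z \<Longrightarrow> z<m \<Longrightarrow> g y \<le> g z"
    and bd: "\<And>y. a<y \<Longrightarrow> y<m \<Longrightarrow> g y \<le> c"
  shows "(g \<longlongrightarrow> Sup (g ` {a<..<m})) (at_left m)"
proof (rule order_tendstoI)
  let ?S = "g ` {a<..<m}"
  have ne: "?S \<noteq> {}" using am by auto
  fix u assume "u < Sup ?S"
  then obtain s where "s \<in> ?S" "u < s" using less_cSupD[OF ne] by blast
  then obtain y0 where y0: "a<y0" "y0<m" "u < g y0" by auto
  show "eventually (\<lambda>y. u < g y) (at_left m)"
    using eventually_at_left_real[OF y0(2)]
  proof (rule eventually_mono)
    fix y assume "y \<in> {y0<..<m}"
    then have "g y0 \<le> g y" using mono y0 by auto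
    then show "u < g y" using y0 by linarith
  qed
next
  let ?S = "g ` {a<..<m}"
  have bdd: "bdd_above ?S" using bd by (auto intro!: bdd_aboveI[of _ c])
  fix u assume u: "Sup ?S < u"
  show "eventually (\<lambda>y. g y < u) (at_left m)"
    using eventually_at_left_real[OF am]
  proof (rule eventually_mono)
    fix y assume "y \<in> {a<..<m}"
    then have "g y \<le> Sup ?S" using bdd by (intro cSup_upper) auto
    then show "g y < u" using u by linarith
  qed
qed

lemma conv_derivs:
  fixes f :: "real \<Rightarrow> real"
  assumes f: "convex_on I f" and m: "m \<in> interior I"
  shows "((\<lambda>y. (f y - f m) / (y - m)) \<longlongrightarrow> right_deriv f m) (at_right m)"
    and "((\<lambda>y. (f y - f m) / (y - m)) \<longlongrightarrow> left_deriv f m) (at_left m)"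
    and "\<And>x. x \<in> I \<Longrightarrow> m < x \<Longrightarrow> right_deriv f m \<le> (f x - f m) / (x - m)"
    and "\<And>x. x \<in> I \<Longrightarrow> x < m \<Longrightarrow> (f x - f m) / (x - m) \<le> left_deriv f m"
proof -
  define q where "q = (\<lambda>y. (f y - f m) / (y - m))"
  obtain e where e: "e > 0" "ball m e \<subseteq> I" using m mem_interior by blast
  define a where "a = m - e/2"
  define b where "b = m + e/2"
  have aI: "a \<in> I" and bI: "b \<in> I" and am: "a < m" and mb: "m < b"
    using e by (auto simp: a_def b_def dist_real_def subset_iff)
  have mI: "m \<in> I" using m interior_subset by blast
  have incR: "q y \<le> q z" if "m < y" "y \<le> z" "z \<in> I" for y z
  proof (cases "y = z")
    case False
    then have "y < z" using that by simp
    from convex_on_slope_le(1)[OF f mI \<open>z \<in> I\<close> \<open>m < y\<close> this]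
    show ?thesis unfolding q_def by (simp add: swap_quot)
  qed simp
  have incL: "q y \<le> q z" if "y \<le> z" "z < m" "y \<in> I" for y z
  proof (cases "y = z")
    case False
    then have "y < z" using that by simp
    from convex_on_slope_le(2)[OF f \<open>y \<in> I\<close> mI this \<open>z < m\<close>]
    show ?thesis unfolding q_def by simp
  qed simp
  have mid: "q y \<le> q z" if "y < m" "m < z" "y \<in> I" "z \<in> I" for y z
  proof -
    have 1: "(f y - f m) / (y - m) \<le> (f y - f z) / (y - z)"
      using convex_on_slope_le(1)[OF f \<open>y \<in> I\<close> \<open>z \<in> I\<close> that(1,2)] .
    have 2: "(f y - f z) / (y - z) \<le> (f m - f z) / (m - z)"
      using convex_on_slope_le(2)[OF f \<open>y \<in> I\<close> \<open>z \<in> I\<close> that(1,2)] .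
    have "(f m - f z) / (m - z) = q z" unfolding q_def by (simp add: swap_quot)
    then show ?thesis using 1 2 unfolding q_def by linarith
  qed
  have tR: "(q \<longlongrightarrow> Inf (q ` {m<..<b})) (at_right m)"
  proof (rule mono_lim_right[OF mb, of q "q a"])
    fix y z assume "m < y" "y \<le> z" "z < b"
    moreover have "z \<in> I" using \<open>m < y\<close> \<open>y \<le> z\<close> \<open>z < b\<close> e(2) b_def
      by (auto simp: dist_real_def subset_iff)
    ultimately show "q y \<le> q z" using incR by blast
  next
    fix y assume "m < y" "y < b"
    moreover have "y \<in> I" using \<open>m < y\<close> \<open>y < b\<close> e(2) b_def
      by (auto simp: dist_real_def subset_iff)
    ultimately show "q a \<le> q y" using mid am aI by blast
  qed
  have tL: "(q \<longlongrightarrow> Sup (q ` {a<..<m})) (at_left m)"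
  proof (rule mono_lim_left[OF am, of q "q b"])
    fix y z assume "a < y" "y \<le> z" "z < m"
    moreover have "y \<in> I" using \<open>a < y\<close> \<open>y \<le> z\<close> \<open>z < m\<close> e(2) a_def
      by (auto simp: dist_real_def subset_iff)
    ultimately show "q y \<le> q z" using incL by blast
  next
    fix y assume "a < y" "y < m"
    moreover have "y \<in> I" using \<open>a < y\<close> \<open>y < m\<close> e(2) a_def
      by (auto simp: dist_real_def subset_iff)
    ultimately show "q y \<le> q b" using mid mb bI by blast
  qed
  have rd: "right_deriv f m = Inf (q ` {m<..<b})"
    unfolding right_deriv_def q_def[symmetric]
    by (rule tendsto_Lim[OF trivial_limit_at_right_real tR])
  have ld: "left_deriv f m = Sup (q ` {a<..<m})"
    unfolding left_deriv_def q_def[symmetric]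
    by (rule tendsto_Lim[OF trivial_limit_at_left_real tL])
  show "((\<lambda>y. (f y - f m) / (y - m)) \<longlongrightarrow> right_deriv f m) (at_right m)"
    using tR rd q_def by simp
  show "((\<lambda>y. (f y - f m) / (y - m)) \<longlongrightarrow> left_deriv f m) (at_left m)"
    using tL ld q_def by simp
  show "right_deriv f m \<le> (f x - f m) / (x - m)" if "x \<in> I" "m < x" for x
  proof -
    have "right_deriv f m \<le> q x"
    proof (rule tendsto_upperbound[OF tR[folded rd]])
      show "eventually (\<lambda>y. q y \<le> q x) (at_right m)"
        using eventually_at_right_real[OF \<open>m < x\<close>]
        by (rule eventually_mono) (use incR that in auto)
    qed (rule trivial_limit_at_right_real)
    then show ?thesis unfolding q_def .
  qed
  show "(f x - f m) / (x - m) \<le> left_deriv f m" if "x \<in> I" "x < m" for x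
  proof -
    have "q x \<le> left_deriv f m"
    proof (rule tendsto_lowerbound[OF tL[folded ld]])
      show "eventually (\<lambda>y. q x \<le> q y) (at_left m)"
        using eventually_at_left_real[OF \<open>x < m\<close>]
        by (rule eventually_mono) (use incL that in auto)
    qed (rule trivial_limit_at_left_real)
    then show ?thesis unfolding q_def .
  qed
qed


lemma conv_support:
  fixes f :: "real \<Rightarrow> real"
  assumes f: "convex_on I f" and m: "m \<in> interior I"
    and l1: "left_deriv f m \<le> l" and l2: "l \<le> right_deriv f m" and x: "x \<in> I"
  shows "f m + l * (x - m) \<le> f x"
proof (cases "x = m")
  case False
  show ?thesis
  proof (cases "m < x")
    case True
    have "l \<le> (f x - f m) / (x - m)" using conv_derivs(3)[OF f m x True] l2 by linarith
    then have "l * (x - m) \<le> f x - f m" using True by (simp add: le_divide_eq)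
    then show ?thesis by linarith
  next
    case False
    then have xm: "x < m" using \<open>x \<noteq> m\<close> by linarith
    have "(f x - f m) / (x - m) \<le> l" using conv_derivs(4)[OF f m x xm] l1 by linarith
    then have "l * (x - m) \<le> f x - f m" using xm by (simp add: divide_le_eq)
    then show ?thesis by linarith
  qed
qed simp

lemma conc_support:
  fixes f :: "real \<Rightarrow> real"
  assumes f: "concave_on I f" and m: "m \<in> interior I"
    and l1: "right_deriv f m \<le> l" and l2: "l \<le> left_deriv f m" and x: "x \<in> I"
  shows "f x \<le> f m + l * (x - m)"
proof -
  define g where "g = (\<lambda>y. - f y)"
  have g: "convex_on I g" using f unfolding g_def concave_on_def by simp
  have qg: "(\<lambda>y. (g y - g m) / (y - m)) = (\<lambda>y. - ((f y - f m) / (y - m)))"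
    unfolding g_def by (simp add: minus_divide_left)
  have "((\<lambda>y. - ((f y - f m) / (y - m))) \<longlongrightarrow> right_deriv g m) (at_right m)"
    using conv_derivs(1)[OF g m] qg by simp
  from tendsto_minus[OF this]
  have "((\<lambda>y. (f y - f m) / (y - m)) \<longlongrightarrow> - right_deriv g m) (at_right m)"
    by simp
  then have r: "right_deriv f m = - right_deriv g m"
    unfolding right_deriv_def by (rule tendsto_Lim[OF trivial_limit_at_right_real])
  have "((\<lambda>y. - ((f y - f m) / (y - m))) \<longlongrightarrow> left_deriv g m) (at_left m)"
    using conv_derivs(2)[OF g m] qg by simp
  from tendsto_minus[OF this]
  have "((\<lambda>y. (f y - f m) / (y - m)) \<longlongrightarrow> - left_deriv g m) (at_left m)"
    by simp
  then have lft: "left_deriv f m = - left_deriv g m"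
    unfolding left_deriv_def by (rule tendsto_Lim[OF trivial_limit_at_left_real])
  have "g m + (-l) * (x - m) \<le> g x"
    by (rule conv_support[OF g m]) (use l1 l2 r lft x in auto)
  then show ?thesis unfolding g_def by simp
qed

lemma cgamble_affine:
  assumes "cgamble B Y"
  shows "cgamble B (\<lambda>w. l * Y w + c)"
proof -
  obtain M where M: "\<And>w. w \<in> B \<Longrightarrow> norm (Y w) \<le> M"
    using assms unfolding cgamble_def bounded_iff by auto
  have "norm (l * Y w + c) \<le> \<bar>l\<bar> * M + \<bar>c\<bar>" if "w \<in> B" for w
  proof -
    have "\<bar>l * Y w\<bar> \<le> \<bar>l\<bar> * M" using M[OF that] by (simp add: abs_mult mult_left_mono)
    then show ?thesis by simp
  qed
  then show ?thesis unfolding cgamble_def bounded_iff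
    by (intro exI[of _ "\<bar>l\<bar> * M + \<bar>c\<bar>"]) auto
qed

lemma cgamble_neg:
  assumes "cgamble B Y"
  shows "cgamble B (\<lambda>w. - Y w)"
  using cgamble_affine[OF assms, of "-1" 0] by simp

lemma mu_affine:
  assumes mu: "unc_measure B \<mu>" and X: "cgamble B X" and l: "l \<ge> 0"
  shows "\<mu> (\<lambda>w. l * X w + c) = l * \<mu> X + c"
proof -
  have "cgamble B (\<lambda>w. l * X w)" using cgamble_affine[OF X, of l 0] by simp
  then have "\<mu> (\<lambda>w. l * X w + c) = \<mu> (\<lambda>w. l * X w) + c"
    using conjunct1[OF conjunct2[OF mu[unfolded unc_measure_def]]] by simp
  also have "\<dots> = l * \<mu> X + c" using conjunct2[OF conjunct2[OF mu[unfolded unc_measure_def]]] X l by simp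
  finally show ?thesis .
qed

lemma mu_mono:
  assumes mu: "unc_measure B \<mu>" and "cgamble B X" "cgamble B Y" "\<And>w. w \<in> B \<Longrightarrow> Y w \<le> X w"
  shows "\<mu> Y \<le> \<mu> X"
  using conjunct1[OF mu[unfolded unc_measure_def]] assms(2-4) by simp

theorem theorem3:
  fixes B :: "'w set" and X :: "'w \<Rightarrow> real" and I :: "real set"
    and \<phi> \<psi> :: "real \<Rightarrow> real" and \<mu> :: "('w \<Rightarrow> real) \<Rightarrow> real"
  assumes B_ne: "B \<noteq> {}"
    and X_gamble: "bounded (range X)"
    and I_int: "is_interval I"
    and X_in_I: "X ` B \<subseteq> I"
    and phi_conv: "convex_on I \<phi>"
    and psi_conc: "concave_on I \<psi>"
    and phi_gamble: "cgamble B (\<lambda>w. \<phi> (X w))"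
    and psi_gamble: "cgamble B (\<lambda>w. \<psi> (X w))"
    and mu: "unc_measure B \<mu>"
    and interior: "\<mu> X \<in> interior I"
  shows "((\<exists>l. left_deriv \<phi> (\<mu> X) \<le> l \<and> l \<le> right_deriv \<phi> (\<mu> X) \<and> l \<ge> 0)
            \<longrightarrow> \<mu> (\<lambda>w. \<phi> (X w)) \<ge> \<phi> (\<mu> X)) \<and>
         ((\<exists>l. left_deriv \<phi> (\<mu> X) \<le> l \<and> l \<le> right_deriv \<phi> (\<mu> X) \<and> l \<le> 0)
            \<longrightarrow> conj_measure \<mu> (\<lambda>w. \<phi> (X w)) \<ge> \<phi> (\<mu> X)) \<and>
         ((\<exists>l. right_deriv \<psi> (\<mu> X) \<le> l \<and> l \<le> left_deriv \<psi> (\<mu> X) \<and> l \<ge> 0)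
            \<longrightarrow> \<mu> (\<lambda>w. \<psi> (X w)) \<le> \<psi> (\<mu> X)) \<and>
         ((\<exists>l. right_deriv \<psi> (\<mu> X) \<le> l \<and> l \<le> left_deriv \<psi> (\<mu> X) \<and> l \<le> 0)
            \<longrightarrow> conj_measure \<mu> (\<lambda>w. \<psi> (X w)) \<le> \<psi> (\<mu> X))"
proof -
  define m where "m = \<mu> X"
  have Xg: "cgamble B X" unfolding cgamble_def
    using X_gamble by (rule bounded_subset) auto
  have XI: "\<And>w. w \<in> B \<Longrightarrow> X w \<in> I" using X_in_I by blast
  have c1: "\<mu> (\<lambda>w. \<phi> (X w)) \<ge> \<phi> m"
    if l: "left_deriv \<phi> m \<le> l" "l \<le> right_deriv \<phi> m" "l \<ge> 0" for l
  proof -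
    have "\<mu> (\<lambda>w. l * X w + (\<phi> m - l * m)) \<le> \<mu> (\<lambda>w. \<phi> (X w))"
    proof (rule mu_mono[OF mu phi_gamble cgamble_affine[OF Xg]])
      fix w assume "w \<in> B"
      from conv_support[OF phi_conv interior[folded m_def] l(1,2) XI[OF this]]
      show "l * X w + (\<phi> m - l * m) \<le> \<phi> (X w)" by (simp add: algebra_simps)
    qed
    moreover have "\<mu> (\<lambda>w. l * X w + (\<phi> m - l * m)) = \<phi> m"
      using mu_affine[OF mu Xg l(3)] m_def by simp
    ultimately show ?thesis by simp
  qed
  have c2: "conj_measure \<mu> (\<lambda>w. \<phi> (X w)) \<ge> \<phi> m"
    if l: "left_deriv \<phi> m \<le> l" "l \<le> right_deriv \<phi> m" "l \<le> 0" for l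
  proof -
    have "\<mu> (\<lambda>w. - \<phi> (X w)) \<le> \<mu> (\<lambda>w. (-l) * X w + (l * m - \<phi> m))"
    proof (rule mu_mono[OF mu cgamble_affine[OF Xg] cgamble_neg[OF phi_gamble]])
      fix w assume "w \<in> B"
      from conv_support[OF phi_conv interior[folded m_def] l(1,2) XI[OF this]]
      show "- \<phi> (X w) \<le> (-l) * X w + (l * m - \<phi> m)" by (simp add: algebra_simps)
    qed
    moreover have "\<mu> (\<lambda>w. (-l) * X w + (l * m - \<phi> m)) = - \<phi> m"
      using mu_affine[OF mu Xg, of "-l"] l(3) m_def by simp
    ultimately show ?thesis unfolding conj_measure_def by simp
  qed
  have c3: "\<mu> (\<lambda>w. \<psi> (X w)) \<le> \<psi> m"
    if l: "right_deriv \<psi> m \<le> l" "l \<le> left_deriv \<psi> m" "l \<ge> 0" for l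
  proof -
    have "\<mu> (\<lambda>w. \<psi> (X w)) \<le> \<mu> (\<lambda>w. l * X w + (\<psi> m - l * m))"
    proof (rule mu_mono[OF mu cgamble_affine[OF Xg] psi_gamble])
      fix w assume "w \<in> B"
      from conc_support[OF psi_conc interior[folded m_def] l(1,2) XI[OF this]]
      show "\<psi> (X w) \<le> l * X w + (\<psi> m - l * m)" by (simp add: algebra_simps)
    qed
    moreover have "\<mu> (\<lambda>w. l * X w + (\<psi> m - l * m)) = \<psi> m"
      using mu_affine[OF mu Xg l(3)] m_def by simp
    ultimately show ?thesis by simp
  qed
  have c4: "conj_measure \<mu> (\<lambda>w. \<psi> (X w)) \<le> \<psi> m"
    if l: "right_deriv \<psi> m \<le> l" "l \<le> left_deriv \<psi> m" "l \<le> 0" for l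
  proof -
    have "\<mu> (\<lambda>w. (-l) * X w + (l * m - \<psi> m)) \<le> \<mu> (\<lambda>w. - \<psi> (X w))"
    proof (rule mu_mono[OF mu cgamble_neg[OF psi_gamble] cgamble_affine[OF Xg]])
      fix w assume "w \<in> B"
      from conc_support[OF psi_conc interior[folded m_def] l(1,2) XI[OF this]]
      show "(-l) * X w + (l * m - \<psi> m) \<le> - \<psi> (X w)" by (simp add: algebra_simps)
    qed
    moreover have "\<mu> (\<lambda>w. (-l) * X w + (l * m - \<psi> m)) = - \<psi> m"
      using mu_affine[OF mu Xg, of "-l"] l(3) m_def by simp
    ultimately show ?thesis unfolding conj_measure_def by simp
  qed
  show ?thesis using c1 c2 c3 c4 unfolding m_def by blast
qed

end
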